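(* Let $P$ be a nilpotent linear operator on a finite-dimensional real or complex symplectic vector space $(V, B)$, self-adjoint with respect to $B$, and suppose that $(V, B, P)$ is a direct sum of Jordan blocks all of the same height $k$. Then the subspaces of $V$ invariant under $\mathrm{Aut}(V, B, P)$ are exactly the subspaces $\operatorname{Ker} P^i = \operatorname{Im} P^{k-i}$, $0 \le i \le k$.
   Context: $P$ self-adjoint with respect to $B$ means $B(Pu,v) = B(u,Pv)$. $\mathrm{Aut}(V,B,P)$ is the group of linear automorphisms of $V$ preserving $B$ and commuting with $P$. A Jordan block of height $k$ (with eigenvalue $0$) is a $2k$-dimensional $B$-orthogonal summand with a basis in which $B = \begin{pmatrix} 0 & E_k \\ -E_k & 0\end{pmatrix}$ and the form $A(u,v) = B(Pu,v)$ has matrix $\begin{pmatrix} 0 & J_k(0) \\ -J_k(0)^T & 0\end{pmatrix}$, where $J_k(0)$ is the nilpotent $k\times k$ Jordan cell; on such a block $P$ acts as two nilpotent Jordan cells of size $k$. "$(V,B,P)$ is a direct sum of such blocks" means $V$ decomposes into a $B$-orthogonal, $P$-invariant direct sum of such blocks. *)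

theory Defs
  imports "HOL-Analysis.Analysis"
begin

text \<open>The space V is modelled as 'k^'n (finite-dimensional over the field 'k),
  subspaces / spans / independence are those of the vector space vec over 'k
  (scalar multiplication (*s)), bilinear forms are functions V => V => 'k.\<close>

definition bilinear_form :: "('k::field^'n \<Rightarrow> 'k^'n \<Rightarrow> 'k) \<Rightarrow> bool" where
  "bilinear_form B \<longleftrightarrow>
     (\<forall>u. Vector_Spaces.linear (*s) (*) (\<lambda>v. B u v)) \<and>
     (\<forall>v. Vector_Spaces.linear (*s) (*) (\<lambda>u. B u v))"

text \<open>Symplectic form: nondegenerate skew-symmetric bilinear form.\<close>
definition symplectic_form :: "('k::field^'n \<Rightarrow> 'k^'n \<Rightarrow> 'k) \<Rightarrow> bool" where
  "symplectic_form B \<longleftrightarrow> bilinear_form B \<and>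
     (\<forall>u v. B u v = - B v u) \<and>
     (\<forall>u. (\<forall>v. B u v = 0) \<longrightarrow> u = 0)"

definition lin_op :: "('k::field^'n \<Rightarrow> 'k^'n) \<Rightarrow> bool" where
  "lin_op P \<longleftrightarrow> Vector_Spaces.linear (*s) (*s) P"

definition nilpotent_op :: "('k::field^'n \<Rightarrow> 'k^'n) \<Rightarrow> bool" where
  "nilpotent_op P \<longleftrightarrow> (\<exists>m. P ^^ m = (\<lambda>_. 0))"

definition self_adjoint :: "('k::field^'n \<Rightarrow> 'k^'n \<Rightarrow> 'k) \<Rightarrow> ('k^'n \<Rightarrow> 'k^'n) \<Rightarrow> bool" where
  "self_adjoint B P \<longleftrightarrow> (\<forall>u v. B (P u) v = B u (P v))"

text \<open>Aut(V,B,P): linear automorphisms preserving B and commuting with P.\<close>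
definition Aut :: "('k::field^'n \<Rightarrow> 'k^'n \<Rightarrow> 'k) \<Rightarrow> ('k^'n \<Rightarrow> 'k^'n) \<Rightarrow> ('k^'n \<Rightarrow> 'k^'n) set" where
  "Aut B P = {g. Vector_Spaces.linear (*s) (*s) g \<and> bij g \<and>
               (\<forall>u v. B (g u) (g v) = B u v) \<and> (\<forall>u. g (P u) = P (g u))}"

text \<open>Matrix entries (indices 0..2k-1) of the standard block forms:
  B = [[0, E_k], [-E_k, 0]],  A = [[0, J_k(0)], [-J_k(0)^T, 0]],
  where J_k(0) is the nilpotent Jordan cell (ones on the superdiagonal).\<close>
definition Jcell :: "nat \<Rightarrow> nat \<Rightarrow> 'k::field" where
  "Jcell a b = (if b = a + 1 then 1 else 0)"

definition Bstd :: "nat \<Rightarrow> nat \<Rightarrow> nat \<Rightarrow> 'k::field" where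
  "Bstd k i l = (if i < k \<and> k \<le> l then (if l - k = i then 1 else 0)
                 else if k \<le> i \<and> l < k then (if i - k = l then -1 else 0)
                 else 0)"

definition Astd :: "nat \<Rightarrow> nat \<Rightarrow> nat \<Rightarrow> 'k::field" where
  "Astd k i l = (if i < k \<and> k \<le> l then Jcell i (l - k)
                 else if k \<le> i \<and> l < k then - Jcell l (i - k)
                 else 0)"

text \<open>(V,B,P) is a B-orthogonal, P-invariant direct sum of m Jordan blocks of height k:
  x j i (j < m, i < 2k) is a basis of V; block j is span {x j i | i < 2k};
  in the basis x j 0, ..., x j (2k-1) of block j the forms B and A(u,v) = B(P u, v)
  have the standard matrices Bstd k and Astd k.\<close>
definition jordan_blocks_same_height ::
  "('k::field^'n \<Rightarrow> 'k^'n \<Rightarrow> 'k) \<Rightarrow> ('k^'n \<Rightarrow> 'k^'n) \<Rightarrow> nat \<Rightarrow> bool" where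
  "jordan_blocks_same_height B P k \<longleftrightarrow>
    (\<exists>(m::nat) (x :: nat \<Rightarrow> nat \<Rightarrow> 'k^'n).
       inj_on (\<lambda>(j, i). x j i) ({..<m} \<times> {..<2*k}) \<and>
       vec.independent ((\<lambda>(j, i). x j i) ` ({..<m} \<times> {..<2*k})) \<and>
       vec.span ((\<lambda>(j, i). x j i) ` ({..<m} \<times> {..<2*k})) = UNIV \<and>
       (\<forall>j<m. P ` vec.span (x j ` {..<2*k}) \<subseteq> vec.span (x j ` {..<2*k})) \<and>
       (\<forall>j<m. \<forall>j'<m. j \<noteq> j' \<longrightarrow>
          (\<forall>u\<in>vec.span (x j ` {..<2*k}). \<forall>v\<in>vec.span (x j' ` {..<2*k}). B u v = 0)) \<and>
       (\<forall>j<m. \<forall>i<2*k. \<forall>l<2*k. B (x j i) (x j l) = Bstd k i l \<and>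
                              B (P (x j i)) (x j l) = Astd k i l))"

text \<open>W is a subspace invariant under every element of Aut(V,B,P).\<close>
definition aut_invariant :: "('k::field^'n \<Rightarrow> 'k^'n \<Rightarrow> 'k) \<Rightarrow> ('k^'n \<Rightarrow> 'k^'n) \<Rightarrow> ('k^'n) set \<Rightarrow> bool" where
  "aut_invariant B P W \<longleftrightarrow> vec.subspace W \<and> (\<forall>g\<in>Aut B P. g ` W \<subseteq> W)"

end

theory Submission imports Defs begin
lemma linI:
  fixes f :: "'k::field^'n \<Rightarrow> 'k^'n"
  assumes "\<And>x y. f (x+y) = f x + f y" "\<And>c x. f (c *s x) = c *s f x"
  shows "Vector_Spaces.linear (*s) (*s) f"
  using assms by (simp add: Vector_Spaces.linear_def module_hom_axioms_def vec.vector_space_axioms module_hom_def vec.module_axioms)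

lemma bil:
  fixes B :: "'k::field^'n \<Rightarrow> 'k^'n \<Rightarrow> 'k"
  assumes "bilinear_form B"
  shows "B u (v + w) = B u v + B u w" "B (u+w) v = B u v + B w v"
    "B u (c *s v) = c * B u v" "B (c *s u) v = c * B u v"
  using assms unfolding bilinear_form_def Vector_Spaces.linear_def module_hom_axioms_def module_hom_def
  by auto

lemma negself: "(x::'a::field_char_0) = - x \<Longrightarrow> x = 0"
  unfolding eq_neg_iff_add_eq_0 mult_2[symmetric] by simp

locale symp =
  fixes B :: "'k::field_char_0^'n \<Rightarrow> 'k^'n \<Rightarrow> 'k" and P :: "'k^'n \<Rightarrow> 'k^'n"
  assumes sf: "symplectic_form B" and lp: "lin_op P" and sa: "self_adjoint B P"
begin

lemma bf: "bilinear_form B" using sf by (simp add: symplectic_form_def)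
lemma Badd: "B u (v + w) = B u v + B u w" "B (u+w) v = B u v + B w v"
  using bil[OF bf] by auto
lemma Bscale: "B u (c *s v) = c * B u v" "B (c *s u) v = c * B u v"
  using bil[OF bf] by auto
lemma B0: "B u 0 = 0" "B 0 u = 0"
  using Bscale(1)[where u=u and c=0 and v=0] Bscale(2)[where u=0 and c=0 and v=u] by auto
lemma Bdiff: "B u (v - w) = B u v - B u w" "B (v - w) u = B v u - B w u"
  using Badd(1)[of u "v-w" w] Badd(2)[of "v-w" w u] by (simp_all add: algebra_simps)
lemma Bsum: "B u (sum f A) = (\<Sum>i\<in>A. B u (f i))" "B (sum f A) u = (\<Sum>i\<in>A. B (f i) u)"
proof -
  show "B u (sum f A) = (\<Sum>i\<in>A. B u (f i))"
    by (induction A rule: infinite_finite_induct) (auto simp: B0 Badd)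
  show "B (sum f A) u = (\<Sum>i\<in>A. B (f i) u)"
    by (induction A rule: infinite_finite_induct) (auto simp: B0 Badd)
qed
lemma skew: "B u v = - B v u" using sf unfolding symplectic_form_def by blast
lemma Bself: "B u u = 0" using skew[of u u] by (rule negself)
lemma nondeg: "(\<And>v. B u v = 0) \<Longrightarrow> u = 0" using sf unfolding symplectic_form_def by blast

lemma linP: "Vector_Spaces.linear (*s) (*s) P" using lp by (simp add: lin_op_def)
lemma linPn: "Vector_Spaces.linear (*s) (*s) (P^^n)"
proof (induction n)
  case 0 then show ?case using vec.linear_id by (simp add: id_def)
next
  case (Suc n) then show ?case
    using Vector_Spaces.linear_compose[OF Suc linP] by (simp add: comp_def)
qed
lemma Pn_add: "(P^^n) (u+v) = (P^^n) u + (P^^n) v" by (rule vec.linear_add[OF linPn])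
lemma Pn_scale: "(P^^n) (c *s v) = c *s (P^^n) v" by (rule vec.linear_scale[OF linPn])
lemma Pn_0: "(P^^n) 0 = 0" by (rule vec.linear_0[OF linPn])
lemma Pn_sum: "(P^^n) (sum f A) = (\<Sum>i\<in>A. (P^^n) (f i))"
  by (induction A rule: infinite_finite_induct) (auto simp: Pn_0 Pn_add)
lemma P_sum: "P (sum f A) = (\<Sum>i\<in>A. P (f i))" using Pn_sum[of 1] by simp
lemma P_scale: "P (c *s v) = c *s P v" using Pn_scale[of 1] by simp
lemma adjn: "B ((P^^n) u) v = B u ((P^^n) v)"
  using sa by (induction n arbitrary: u v) (auto simp: self_adjoint_def funpow_Suc_right funpow_swap1)
lemma iso: "B ((P^^r) a) ((P^^s) a) = 0"
proof -
  have "B ((P^^r) a) ((P^^s) a) = B ((P^^s) ((P^^r) a)) a"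
    by (rule adjn[symmetric])
  also have "\<dots> = B ((P^^(s+r)) a) a"
    by (simp add: funpow_add)
  also have "\<dots> = 0"
  proof (rule negself)
    have "B ((P^^(s+r)) a) a = B a ((P^^(s+r)) a)" by (rule adjn)
    also have "\<dots> = - B ((P^^(s+r)) a) a" by (rule skew)
    finally show "B ((P^^(s+r)) a) a = - B ((P^^(s+r)) a) a" .
  qed
  finally show ?thesis .
qed

end

locale nsymp = symp B P for B :: "'k::field_char_0^'n \<Rightarrow> 'k^'n \<Rightarrow> 'k" and P +
  fixes k :: nat
  assumes nil: "\<And>v. (P^^k) v = 0"
begin

definition G :: "'k^'n \<Rightarrow> 'k^'n \<Rightarrow> 'k^'n \<Rightarrow> 'k^'n" where
  "G a b v = (\<Sum>r<k. B ((P^^(k - Suc r)) a) v *s (P^^r) b)"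

definition T :: "'k \<Rightarrow> 'k^'n \<Rightarrow> 'k^'n \<Rightarrow> 'k^'n" where
  "T c a v = v + c *s G a a v"

lemma G_add: "G a b (u + v) = G a b u + G a b v"
  unfolding G_def by (simp add: Badd vec.scale_left_distrib sum.distrib)
lemma G_scale: "G a b (c *s v) = c *s G a b v"
  unfolding G_def by (simp add: Bscale vec.scale_sum_right)
lemma G_add1: "G (a + a') b v = G a b v + G a' b v"
  unfolding G_def by (simp add: Badd Pn_add vec.scale_left_distrib sum.distrib)
lemma G_add2: "G a (b + b') v = G a b v + G a b' v"
  unfolding G_def by (simp add: Pn_add vec.scale_right_distrib sum.distrib)
lemma B_G2: "B y (G a b v) = (\<Sum>r<k. B ((P^^(k - Suc r)) a) v * B y ((P^^r) b))"
  unfolding G_def by (simp add: Bsum Bscale)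
lemma B_G1: "B (G a b v) y = (\<Sum>r<k. B ((P^^(k - Suc r)) a) v * B ((P^^r) b) y)"
  unfolding G_def by (simp add: Bsum Bscale)
lemma B_iso_G: "B ((P^^s) a) (G a a v) = 0"
  unfolding B_G2 iso by simp
lemma GG: "G a a (G a a v) = 0"
  unfolding G_def[of a a "G a a v"] B_iso_G by simp
lemma BGG: "B (G a a u) (G a a v) = 0"
  unfolding B_G2[of "G a a u"] by (simp add: B_G1 iso)

lemma P_G: "G a b (P v) = P (G a b v)"
proof -
  define g where "g r = B ((P^^(k - r)) a) v *s (P^^r) b" for r
  have g0: "g 0 = 0" unfolding g_def using nil by (simp add: B0)
  have gk: "g k = 0" unfolding g_def using nil by simp
  have "sum g {..<Suc k} = g 0 + (\<Sum>r<k. g (Suc r))" by (rule sum.lessThan_Suc_shift)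
  moreover have "sum g {..<Suc k} = sum g {..<k} + g k" by simp
  ultimately have eq: "(\<Sum>r<k. g (Suc r)) = sum g {..<k}" using g0 gk by simp
  have "G a b (P v) = sum g {..<k}"
    unfolding G_def g_def
  proof (rule sum.cong[OF refl])
    fix r assume "r \<in> {..<k}"
    then have "Suc (k - Suc r) = k - r" by simp
    then have "B ((P ^^ (k - Suc r)) a) (P v) = B ((P ^^ (k - r)) a) v"
    proof -
      have "B ((P ^^ (k - Suc r)) a) (P v) = B (P ((P ^^ (k - Suc r)) a)) v"
        using sa unfolding self_adjoint_def by metis
      also have "P ((P ^^ (k - Suc r)) a) = (P ^^ Suc (k - Suc r)) a" by simp
      finally show ?thesis using \<open>Suc (k - Suc r) = k - r\<close> by simp
    qed
    then show "B ((P ^^ (k - Suc r)) a) (P v) *s (P ^^ r) b = B ((P ^^ (k - r)) a) v *s (P ^^ r) b" by simp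
  qed
  also have "\<dots> = (\<Sum>r<k. g (Suc r))" using eq by simp
  also have "\<dots> = P (G a b v)"
    unfolding G_def g_def by (simp add: P_sum P_scale)
  finally show ?thesis .
qed

lemma T_add: "T c a (u + v) = T c a u + T c a v"
  unfolding T_def by (simp add: G_add vec.scale_right_distrib algebra_simps)
lemma T_scale: "T c a (d *s v) = d *s T c a v"
  unfolding T_def by (simp add: G_scale vec.scale_right_distrib vec.scale_scale mult.commute)
lemma T_lin: "Vector_Spaces.linear (*s) (*s) (T c a)"
  by (rule linI) (auto simp: T_add T_scale)
lemma T_inv: "T (- c) a (T c a v) = v"
  unfolding T_def by (simp add: G_add G_scale GG)
lemma T_bij: "bij (T c a)"
proof (rule o_bij)
  show "T (- c) a \<circ> T c a = id" by (rule ext) (simp add: T_inv)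
  show "T c a \<circ> T (- c) a = id" by (rule ext) (metis T_inv minus_minus comp_apply id_apply)
qed
lemma T_comm: "T c a (P v) = P (T c a v)"
  unfolding T_def by (simp add: P_G vec.linear_add[OF linP] P_scale)

lemma cross: "B u (G a a v) + B (G a a u) v = 0"
proof -
  have "B (G a a u) v = (\<Sum>r<k. B ((P^^(k - Suc (k - Suc r))) a) u * B ((P^^(k - Suc r)) a) v)"
    unfolding B_G1 by (rule sum.nat_diff_reindex[symmetric])
  also have "\<dots> = (\<Sum>r<k. - (B ((P^^(k - Suc r)) a) v * B u ((P^^r) a)))"
  proof (rule sum.cong[OF refl])
    fix r assume "r \<in> {..<k}"
    then have "k - Suc (k - Suc r) = r" by simp
    then show "B ((P^^(k - Suc (k - Suc r))) a) u * B ((P^^(k - Suc r)) a) v = - (B ((P^^(k - Suc r)) a) v * B u ((P^^r) a))"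
      using skew[of u "(P^^r) a"] by simp
  qed
  finally show ?thesis unfolding B_G2 by (simp add: sum_negf)
qed

lemma T_B: "B (T c a u) (T c a v) = B u v"
proof -
  have "B (T c a u) (T c a v) = B u v + c * (B u (G a a v) + B (G a a u) v) + c * c * B (G a a u) (G a a v)"
    unfolding T_def by (simp add: Badd Bscale algebra_simps)
  then show ?thesis using cross BGG by simp
qed

lemma T_Aut: "T c a \<in> Aut B P"
  unfolding Aut_def using T_lin T_bij T_B T_comm by auto

lemma Pn_high: "i \<le> n \<Longrightarrow> (P^^i) v = 0 \<Longrightarrow> (P^^n) v = 0"
proof -
  assume "i \<le> n" "(P^^i) v = 0"
  then have "n = (n - i) + i" by simp
  then have "(P^^n) v = (P^^(n - i) \<circ> P^^i) v" by (metis funpow_add)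
  then have "(P^^n) v = (P^^(n - i)) ((P^^i) v)" by simp
  then show ?thesis using \<open>(P^^i) v = 0\<close> Pn_0 by simp
qed

lemma gen_step:
  assumes W: "aut_invariant B P W" and ik: "i \<le> k" and i0: "0 < i"
    and Wker: "\<And>v. v \<in> W \<Longrightarrow> (P^^i) v = 0" and w: "w \<in> W" "(P^^(i-1)) w \<noteq> 0"
  shows "(P^^(k-i)) y \<in> W"
proof -
  have sub: "vec.subspace W" and inv: "\<And>g. g \<in> Aut B P \<Longrightarrow> g ` W \<subseteq> W"
    using W unfolding aut_invariant_def by auto
  have Gw: "G a a v \<in> W" if "v \<in> W" for a v
  proof -
    have "T 1 a v \<in> W" using inv[OF T_Aut[of 1 a]] that by auto
    moreover have "G a a v = T 1 a v - v" unfolding T_def by simp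
    ultimately show ?thesis using vec.subspace_diff[OF sub] that by simp
  qed
  have M: "G a b w + G b a w \<in> W" for a b
  proof -
    have "G a b w + G b a w = G (a+b) (a+b) w - G a a w - G b b w"
      by (simp add: G_add1 G_add2 algebra_simps)
    then show ?thesis using Gw[OF w(1)] vec.subspace_diff[OF sub] by metis
  qed
  obtain z0 where "B ((P^^(i-1)) w) z0 \<noteq> 0" using nondeg w(2) by blast
  then obtain z where cz: "B z ((P^^(i-1)) w) \<noteq> 0" using skew by (metis neg_equal_0_iff_equal)
  define c where "c = B z ((P^^(i-1)) w)"
  have c0: "c \<noteq> 0" using cz c_def by simp
  have Pw0: "(P^^n) w = 0" if "i \<le> n" for n using Pn_high[OF that Wker[OF w(1)]] .
  have "\<forall>y. (P^^(k-d)) y \<in> W" if "d \<le> i" for d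
    using that
  proof (induction d)
    case 0
    then show ?case using nil vec.subspace_0[OF sub] by simp
  next
    case (Suc d)
    then have di: "d < i" by simp
    have IH: "(P^^(k-d)) y \<in> W" for y using Suc di by simp
    have inW: "(P^^n) y \<in> W" if "k - d \<le> n" for n y
    proof -
      have "n = (k-d) + (n - (k-d))" using that by simp
      then have "(P^^n) y = (P^^(k-d) \<circ> P^^(n - (k-d))) y" by (metis funpow_add)
      then have "(P^^n) y = (P^^(k-d)) ((P^^(n - (k-d))) y)" by simp
      then show ?thesis using IH by simp
    qed
    define a where "a = (P^^(i - Suc d)) z"
    define X where "X b = (P^^(k - Suc d)) b" for b
    have claim1: "G a b w - c *s X b \<in> W" for b
    proof -
      have "G a b w - c *s X b = (\<Sum>r<k. B ((P^^(k - Suc r)) a) w *s (P^^r) b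
           - (if r = k - Suc d then c *s X b else 0))"
        unfolding G_def sum_subtractf using di ik by simp
      also have "\<dots> \<in> W"
      proof (rule vec.subspace_sum[OF sub])
        fix r assume r: "r \<in> {..<k}"
        have coef: "B ((P^^(k - Suc r)) a) w = B z ((P^^(k - Suc r + (i - Suc d))) w)"
        proof -
          have "B ((P^^(k - Suc r)) a) w = B ((P^^(k - Suc r + (i - Suc d))) z) w"
            unfolding a_def by (simp add: funpow_add)
          also have "\<dots> = B z ((P^^(k - Suc r + (i - Suc d))) w)" by (rule adjn)
          finally show ?thesis .
        qed
        consider "r < k - Suc d" | "r = k - Suc d" | "k - d \<le> r" by linarith
        then show "B ((P^^(k - Suc r)) a) w *s (P^^r) b
           - (if r = k - Suc d then c *s X b else 0) \<in> W"
        proof cases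
          case 1
          then have "B ((P^^(k - Suc r)) a) w = 0" unfolding coef using Pw0[of "k - Suc r + (i - Suc d)"] B0 di
            by simp
          then show ?thesis using 1 vec.subspace_0[OF sub] by simp
        next
          case 2
          then have "k - Suc r + (i - Suc d) = i - 1" using di ik by simp
          then have "B ((P^^(k - Suc r)) a) w = c" unfolding coef c_def by simp
          then show ?thesis using 2 vec.subspace_0[OF sub] X_def by simp
        next
          case 3
          then have "r \<noteq> k - Suc d" using di ik by simp
          then show ?thesis using inW[OF 3] vec.subspace_scale[OF sub] by simp
        qed
      qed
      finally show ?thesis .
    qed
    have claim2: "G b a w - B ((P^^(i-1)) b) w *s X z \<in> W" for b
    proof -
      have "G b a w - B ((P^^(i-1)) b) w *s X z = (\<Sum>r<k. B ((P^^(k - Suc r)) b) w *s (P^^r) a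
           - (if r = k - i then B ((P^^(i-1)) b) w *s X z else 0))"
        unfolding G_def sum_subtractf using di ik i0 by simp
      also have "\<dots> \<in> W"
      proof (rule vec.subspace_sum[OF sub])
        fix r assume r: "r \<in> {..<k}"
        have Pa: "(P^^r) a = (P^^(r + (i - Suc d))) z"
          unfolding a_def by (simp add: funpow_add)
        consider "r < k - i" | "r = k - i" | "k - i < r" by linarith
        then show "B ((P^^(k - Suc r)) b) w *s (P^^r) a
           - (if r = k - i then B ((P^^(i-1)) b) w *s X z else 0) \<in> W"
        proof cases
          case 1
          then have "B ((P^^(k - Suc r)) b) w = 0" unfolding adjn using Pw0[of "k - Suc r"] B0
            by simp
          then show ?thesis using 1 vec.subspace_0[OF sub] by simp
        next
          case 2
          then have "k - Suc r = i - 1" "r + (i - Suc d) = k - Suc d" using di ik i0 by auto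
          then show ?thesis using 2 vec.subspace_0[OF sub] X_def Pa by simp
        next
          case 3
          then have "r \<noteq> k - i" "k - d \<le> r + (i - Suc d)" using di by auto
          then show ?thesis using inW vec.subspace_scale[OF sub] Pa by simp
        qed
      qed
      finally show ?thesis .
    qed
    have comb: "c *s X b + B ((P^^(i-1)) b) w *s X z \<in> W" for b
    proof -
      have "c *s X b + B ((P^^(i-1)) b) w *s X z
         = (G a b w + G b a w) - (G a b w - c *s X b) - (G b a w - B ((P^^(i-1)) b) w *s X z)"
        by (simp add: algebra_simps)
      then show ?thesis using M[of a b] claim1[of b] claim2[of b] vec.subspace_diff[OF sub] by metis
    qed
    have "B ((P^^(i-1)) z) w = c" unfolding c_def adjn ..
    then have h: "c *s X z + c *s X z \<in> W" using comb[of z] by simp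
    have e: "c *s X z + c *s X z = (c + c) *s X z" by (rule vec.scale_left_distrib[symmetric])
    have "inverse (c + c) *s ((c + c) *s X z) \<in> W" using h unfolding e using vec.subspace_scale[OF sub] by blast
    moreover have "c + c \<noteq> 0" using c0 by (metis mult_2 mult_eq_0_iff zero_neq_numeral)
    ultimately have Xz: "X z \<in> W" by (simp add: vec.scale_scale)
    show ?case
    proof
      fix y
      have "c *s X y = (c *s X y + B ((P^^(i-1)) y) w *s X z) - B ((P^^(i-1)) y) w *s X z" by simp
      then have "c *s X y \<in> W" using comb[of y] vec.subspace_scale[OF sub Xz] vec.subspace_diff[OF sub] by metis
      then have "inverse c *s (c *s X y) \<in> W" using vec.subspace_scale[OF sub] by blast
      then show "(P^^(k - Suc d)) y \<in> W" using c0 X_def by (simp add: vec.scale_scale)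
    qed
  qed
  then show ?thesis using ik by simp
qed

lemma comm_n: "(\<And>u. g (P u) = P (g u)) \<Longrightarrow> (P^^n) (g v) = g ((P^^n) v)"
  by (induction n) auto

lemma aut_char:
  assumes kerim: "\<And>i. i \<le> k \<Longrightarrow> {v. (P^^i) v = 0} = range (P^^(k-i))"
  shows "aut_invariant B P W \<longleftrightarrow> (\<exists>i\<le>k. W = {v. (P^^i) v = 0})"
proof
  assume W: "aut_invariant B P W"
  then have sub: "vec.subspace W" unfolding aut_invariant_def by auto
  define Q where "Q i \<longleftrightarrow> i \<le> k \<and> (\<forall>v\<in>W. (P^^i) v = 0)" for i
  have Qk: "Q k" unfolding Q_def using nil by simp
  define i where "i = (LEAST i. Q i)"
  have Qi: "Q i" unfolding i_def using Qk by (rule LeastI)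
  then have ik: "i \<le> k" and Wi: "\<And>v. v \<in> W \<Longrightarrow> (P^^i) v = 0" unfolding Q_def by auto
  show "\<exists>i\<le>k. W = {v. (P^^i) v = 0}"
  proof (intro exI conjI)
    show "i \<le> k" by fact
    show "W = {v. (P^^i) v = 0}"
    proof (cases "i = 0")
      case True
      then show ?thesis using Wi vec.subspace_0[OF sub] by auto
    next
      case False
      then have "\<not> Q (i - 1)" unfolding i_def by (metis diff_less i_def not_less_Least not_gr_zero zero_less_one)
      then obtain w where w: "w \<in> W" "(P^^(i-1)) w \<noteq> 0" unfolding Q_def using ik by auto
      have "(P^^(k-i)) y \<in> W" for y
        using gen_step[OF W ik _ Wi w] False by blast
      then have "{v. (P^^i) v = 0} \<subseteq> W" using kerim[OF ik] by auto
      moreover have "W \<subseteq> {v. (P^^i) v = 0}" using Wi by auto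
      ultimately show ?thesis by blast
    qed
  qed
next
  assume "\<exists>i\<le>k. W = {v. (P^^i) v = 0}"
  then obtain i where ik: "i \<le> k" and Wd: "W = {v. (P^^i) v = 0}" by blast
  have "vec.subspace W" unfolding Wd kerim[OF ik]
    using vec.linear_subspace_image[OF linPn vec.subspace_UNIV] by blast
  moreover have "g ` W \<subseteq> W" if "g \<in> Aut B P" for g
  proof -
    have lg: "Vector_Spaces.linear (*s) (*s) g" and cg: "\<And>u. g (P u) = P (g u)"
      using that unfolding Aut_def by auto
    show ?thesis unfolding Wd using comm_n[of g, OF cg] vec.linear_0[OF lg] by auto
  qed
  ultimately show "aut_invariant B P W" unfolding aut_invariant_def by blast
qed

end
locale blk = symp B P for B :: "'k::field_char_0^'n \<Rightarrow> 'k^'n \<Rightarrow> 'k" and P +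
  fixes k m :: nat and x :: "nat \<Rightarrow> nat \<Rightarrow> 'k^'n"
  assumes spX: "vec.span ((\<lambda>(j, i). x j i) ` ({..<m} \<times> {..<2*k})) = UNIV"
    and invb: "\<And>j. j<m \<Longrightarrow> P ` vec.span (x j ` {..<2*k}) \<subseteq> vec.span (x j ` {..<2*k})"
    and orth: "\<And>j j' u v. j<m \<Longrightarrow> j'<m \<Longrightarrow> j \<noteq> j' \<Longrightarrow> u\<in>vec.span (x j ` {..<2*k}) \<Longrightarrow>
          v\<in>vec.span (x j' ` {..<2*k}) \<Longrightarrow> B u v = 0"
    and valB: "\<And>j i l. j<m \<Longrightarrow> i<2*k \<Longrightarrow> l<2*k \<Longrightarrow> B (x j i) (x j l) = Bstd k i l"
    and valA: "\<And>j i l. j<m \<Longrightarrow> i<2*k \<Longrightarrow> l<2*k \<Longrightarrow> B (P (x j i)) (x j l) = Astd k i l"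
begin

lemma zero_test:
  assumes "\<And>j l. j<m \<Longrightarrow> l<2*k \<Longrightarrow> B d (x j l) = 0"
  shows "d = 0"
proof (rule nondeg)
  fix v
  have "vec.subspace {y. B d y = 0}"
    unfolding vec.subspace_def by (auto simp: B0 Badd Bscale)
  moreover have "(\<lambda>(j, i). x j i) ` ({..<m} \<times> {..<2*k}) \<subseteq> {y. B d y = 0}"
    using assms by auto
  ultimately have "vec.span ((\<lambda>(j, i). x j i) ` ({..<m} \<times> {..<2*k})) \<subseteq> {y. B d y = 0}"
    by (rule vec.span_minimal[rotated])
  then show "B d v = 0" using spX by auto
qed

lemma inblk: "l < 2*k \<Longrightarrow> x j l \<in> vec.span (x j ` {..<2*k})"
  by (rule vec.span_base) auto

lemma orthx: "j<m \<Longrightarrow> j'<m \<Longrightarrow> j \<noteq> j' \<Longrightarrow> u\<in>vec.span (x j ` {..<2*k}) \<Longrightarrow> l < 2*k \<Longrightarrow> B u (x j' l) = 0"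
  using orth inblk by blast

definition nx :: "nat \<Rightarrow> nat \<Rightarrow> 'k^'n" where
  "nx j i = (if i < k then (if Suc i < k then x j (Suc i) else 0) else (if k < i then x j (i - 1) else 0))"

lemma Px: assumes j: "j<m" and i: "i<2*k" shows "P (x j i) = nx j i"
proof -
  have "P (x j i) - nx j i = 0"
  proof (rule zero_test)
    fix j' l assume j': "j'<m" and l: "l<2*k"
    show "B (P (x j i) - nx j i) (x j' l) = 0"
    proof (cases "j' = j")
      case True
      have "B (nx j i) (x j l) = Astd k i l"
        unfolding nx_def using i l j
        by (auto simp: valB B0 Bstd_def Astd_def Jcell_def)
      then show ?thesis using True valA[OF j i l] by (simp add: Bdiff)
    next
      case False
      have "P (x j i) \<in> vec.span (x j ` {..<2*k})" using invb[OF j] inblk[OF i] by blast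
      moreover have "nx j i \<in> vec.span (x j ` {..<2*k})"
        unfolding nx_def using i by (auto intro: inblk vec.span_zero)
      ultimately show ?thesis using orthx[OF j j'] False l by (simp add: Bdiff)
    qed
  qed
  then show ?thesis by simp
qed

lemma Pnx: assumes j: "j<m" and i: "i<2*k"
  shows "(P^^n) (x j i) = (if i<k then (if i+n<k then x j (i+n) else 0) else (if k+n \<le> i then x j (i-n) else 0))"
proof (induction n)
  case 0 then show ?case by simp
next
  case (Suc n)
  have P0: "P 0 = 0" by (rule vec.linear_0[OF linP])
  show ?case
  proof (cases "i < k")
    case True
    then show ?thesis using Suc Px[OF j, of "i+n"] P0 by (auto simp: nx_def)
  next
    case False
    then show ?thesis using Suc Px[OF j, of "i-n"] P0 i by (auto simp: nx_def)
  qed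
qed

lemma Pk0: "(P^^k) v = 0"
proof (rule vec.linear_eq_0_on_span[OF linPn])
  show "v \<in> vec.span ((\<lambda>(j, i). x j i) ` ({..<m} \<times> {..<2*k}))" using spX by simp
  fix y assume "y \<in> (\<lambda>(j, i). x j i) ` ({..<m} \<times> {..<2*k})"
  then obtain j i where "j<m" "i<2*k" "y = x j i" by auto
  then show "(P^^k) y = 0" using Pnx by auto
qed

definition R :: "'k^'n \<Rightarrow> 'k^'n" where
  "R v = (\<Sum>j<m. \<Sum>p<k. (- B (x j (k+p)) v) *s x j p + B (x j p) v *s x j (k+p))"

lemma recon: "v = R v"
proof -
  have "v - R v = 0"
  proof (rule zero_test)
    fix j' l assume j': "j'<m" and l: "l<2*k"
    have inner: "(\<Sum>p<k. B ((- B (x j (k+p)) v) *s x j p + B (x j p) v *s x j (k+p)) (x j' l))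
        = (if j = j' then B v (x j' l) else 0)" if j: "j<m" for j
    proof (cases "j = j'")
      case False
      have "B ((- B (x j (k+p)) v) *s x j p + B (x j p) v *s x j (k+p)) (x j' l) = 0" if "p<k" for p
      proof -
        have "B (x j p) (x j' l) = 0" "B (x j (k+p)) (x j' l) = 0"
          using orthx[OF j j' False _ l] inblk that by auto
        then show ?thesis by (simp only: Badd Bscale) simp
      qed
      then show ?thesis using False by simp
    next
      case True
      define q where "q = (if l < k then l else l - k)"
      have q: "q < k" using l q_def by auto
      have "B ((- B (x j (k+p)) v) *s x j p + B (x j p) v *s x j (k+p)) (x j' l)
            = (if p = q then B v (x j' l) else 0)" if p: "p<k" for p
      proof -
        have "B ((- B (x j (k+p)) v) *s x j p + B (x j p) v *s x j (k+p)) (x j' l)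
          = (- B (x j (k+p)) v) * Bstd k p l + B (x j p) v * Bstd k (k+p) l"
          using valB[OF j, of p l] valB[OF j, of "k+p" l] p l True by (simp only: Badd Bscale)
        also have "\<dots> = (if p = q then B v (x j' l) else 0)"
        proof (cases "l < k")
          case True
          then show ?thesis using p \<open>j = j'\<close> skew[of v "x j' l"] by (auto simp: q_def Bstd_def)
        next
          case False
          then have "l = k + (l - k)" by simp
          then show ?thesis using p False \<open>j = j'\<close> skew[of v "x j' l"] by (auto simp: q_def Bstd_def)
        qed
        finally show ?thesis .
      qed
      then have "(\<Sum>p<k. B ((- B (x j (k+p)) v) *s x j p + B (x j p) v *s x j (k+p)) (x j' l))
          = (\<Sum>p<k. if p = q then B v (x j' l) else 0)" by simp
      also have "\<dots> = B v (x j' l)" using q by simp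
      finally show ?thesis using True by simp
    qed
    have "B (R v) (x j' l) = (\<Sum>j<m. if j = j' then B v (x j' l) else 0)"
      unfolding R_def Bsum using inner by simp
    also have "\<dots> = B v (x j' l)" using j' by simp
    finally show "B (v - R v) (x j' l) = 0" by (simp add: Bdiff)
  qed
  then show ?thesis by simp
qed

lemma kerim: assumes ik: "i \<le> k" shows "{v. (P^^i) v = 0} = range (P^^(k-i))"
proof
  show "range (P^^(k-i)) \<subseteq> {v. (P^^i) v = 0}"
  proof clarify
    fix y
    have "k = i + (k - i)" using ik by simp
    then have "(P^^i) ((P^^(k-i)) y) = (P^^k) y" by (metis comp_apply funpow_add)
    then show "(P^^i) ((P^^(k-i)) y) = 0" using Pk0 by simp
  qed
next
  show "{v. (P^^i) v = 0} \<subseteq> range (P^^(k-i))"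
  proof clarify
    fix v assume v: "(P^^i) v = 0"
    have sub: "vec.subspace (range (P^^(k-i)))"
      using vec.linear_subspace_image[OF linPn vec.subspace_UNIV] by blast
    have kill: "B ((P^^i) y) v = 0" for y using v adjn B0 by metis
    have "R v \<in> range (P^^(k-i))"
      unfolding R_def
    proof (intro vec.subspace_sum[OF sub] vec.subspace_add[OF sub])
      fix j p assume j: "j \<in> {..<m}" and p: "p \<in> {..<k}"
      show "(- B (x j (k+p)) v) *s x j p \<in> range (P^^(k-i))"
      proof (cases "k - i \<le> p")
        case True
        have "(P^^(k-i)) (x j (p - (k-i))) = x j p" using Pnx[of j "p - (k-i)" "k-i"] j p True by auto
        then show ?thesis using vec.subspace_scale[OF sub] by (metis rangeI)
      next
        case False
        have "(P^^i) (x j (k+p+i)) = x j (k+p)" using Pnx[of j "k+p+i" i] j p False by auto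
        then have "B (x j (k+p)) v = 0" using kill by metis
        then show ?thesis using vec.subspace_0[OF sub] by simp
      qed
      show "B (x j p) v *s x j (k+p) \<in> range (P^^(k-i))"
      proof (cases "p < i")
        case True
        have "(P^^(k-i)) (x j (k+p+(k-i))) = x j (k+p)" using Pnx[of j "k+p+(k-i)" "k-i"] j p True ik by auto
        then show ?thesis using vec.subspace_scale[OF sub] by (metis rangeI)
      next
        case False
        have "(P^^i) (x j (p-i)) = x j p" using Pnx[of j "p-i" i] j p False by auto
        then have "B (x j p) v = 0" using kill by metis
        then show ?thesis using vec.subspace_0[OF sub] by simp
      qed
    qed
    then show "v \<in> range (P^^(k-i))" using recon[of v] by simp
  qed
qed

end

lemma main:
  fixes B :: "'k::field_char_0^'n \<Rightarrow> 'k^'n \<Rightarrow> 'k" and P :: "'k^'n \<Rightarrow> 'k^'n"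
  assumes "symplectic_form B" "lin_op P" "self_adjoint B P" "jordan_blocks_same_height B P k"
  shows "(\<forall>i\<le>k. {v. (P ^^ i) v = 0} = range (P ^^ (k - i))) \<and>
            (\<forall>W. aut_invariant B P W \<longleftrightarrow> (\<exists>i\<le>k. W = {v. (P ^^ i) v = 0}))"
proof -
  interpret symp B P using assms by unfold_locales
  obtain m :: nat and x :: "nat \<Rightarrow> nat \<Rightarrow> 'k^'n" where
    injx: "inj_on (\<lambda>(j, i). x j i) ({..<m} \<times> {..<2*k})"
    and indx: "vec.independent ((\<lambda>(j, i). x j i) ` ({..<m} \<times> {..<2*k}))"
    and spX: "vec.span ((\<lambda>(j, i). x j i) ` ({..<m} \<times> {..<2*k})) = UNIV"
    and invb: "\<forall>j<m. P ` vec.span (x j ` {..<2*k}) \<subseteq> vec.span (x j ` {..<2*k})"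
    and orth: "\<forall>j<m. \<forall>j'<m. j \<noteq> j' \<longrightarrow>
          (\<forall>u\<in>vec.span (x j ` {..<2*k}). \<forall>v\<in>vec.span (x j' ` {..<2*k}). B u v = 0)"
    and vals: "\<forall>j<m. \<forall>i<2*k. \<forall>l<2*k. B (x j i) (x j l) = Bstd k i l \<and>
                              B (P (x j i)) (x j l) = Astd k i l"
    using assms(4) unfolding jordan_blocks_same_height_def
    apply -
    apply (elim exE conjE)
    apply (rule that)
    apply assumption+
    done
  interpret blk B P k m x
  proof unfold_locales
    show "vec.span ((\<lambda>(j, i). x j i) ` ({..<m} \<times> {..<2*k})) = UNIV" by (rule spX)
    show "\<And>j. j<m \<Longrightarrow> P ` vec.span (x j ` {..<2*k}) \<subseteq> vec.span (x j ` {..<2*k})"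
      using invb by blast
    show "\<And>j j' u v. j<m \<Longrightarrow> j'<m \<Longrightarrow> j \<noteq> j' \<Longrightarrow> u\<in>vec.span (x j ` {..<2*k}) \<Longrightarrow>
          v\<in>vec.span (x j' ` {..<2*k}) \<Longrightarrow> B u v = 0"
      using orth by blast
    show "\<And>j i l. j<m \<Longrightarrow> i<2*k \<Longrightarrow> l<2*k \<Longrightarrow> B (x j i) (x j l) = Bstd k i l"
      using vals by blast
    show "\<And>j i l. j<m \<Longrightarrow> i<2*k \<Longrightarrow> l<2*k \<Longrightarrow> B (P (x j i)) (x j l) = Astd k i l"
      using vals by blast
  qed
  interpret nsymp B P k using Pk0 by unfold_locales
  show ?thesis
  proof (intro conjI allI impI)
    fix i assume "i \<le> k" then show "{v. (P ^^ i) v = 0} = range (P ^^ (k - i))" by (rule kerim)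
  next
    fix W show "aut_invariant B P W \<longleftrightarrow> (\<exists>i\<le>k. W = {v. (P ^^ i) v = 0})"
      by (rule aut_char[OF kerim])
  qed
qed

theorem corollary1:
  shows "(\<forall>(B :: real^'n \<Rightarrow> real^'n \<Rightarrow> real) (P :: real^'n \<Rightarrow> real^'n) (k::nat).
            symplectic_form B \<and> lin_op P \<and> nilpotent_op P \<and> self_adjoint B P \<and>
            jordan_blocks_same_height B P k \<longrightarrow>
            (\<forall>i\<le>k. {v. (P ^^ i) v = 0} = range (P ^^ (k - i))) \<and>
            (\<forall>W. aut_invariant B P W \<longleftrightarrow> (\<exists>i\<le>k. W = {v. (P ^^ i) v = 0})))
       \<and>
         (\<forall>(B :: complex^'n \<Rightarrow> complex^'n \<Rightarrow> complex) (P :: complex^'n \<Rightarrow> complex^'n) (k::nat).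
            symplectic_form B \<and> lin_op P \<and> nilpotent_op P \<and> self_adjoint B P \<and>
            jordan_blocks_same_height B P k \<longrightarrow>
            (\<forall>i\<le>k. {v. (P ^^ i) v = 0} = range (P ^^ (k - i))) \<and>
            (\<forall>W. aut_invariant B P W \<longleftrightarrow> (\<exists>i\<le>k. W = {v. (P ^^ i) v = 0})))"
proof (rule conjI)
  show "\<forall>(B :: real^'n \<Rightarrow> real^'n \<Rightarrow> real) (P :: real^'n \<Rightarrow> real^'n) (k::nat).
            symplectic_form B \<and> lin_op P \<and> nilpotent_op P \<and> self_adjoint B P \<and>
            jordan_blocks_same_height B P k \<longrightarrow>
            (\<forall>i\<le>k. {v. (P ^^ i) v = 0} = range (P ^^ (k - i))) \<and>
            (\<forall>W. aut_invariant B P W \<longleftrightarrow> (\<exists>i\<le>k. W = {v. (P ^^ i) v = 0}))"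
  proof (intro allI impI)
    fix B :: "real^'n \<Rightarrow> real^'n \<Rightarrow> real" and P :: "real^'n \<Rightarrow> real^'n" and k :: nat
    assume "symplectic_form B \<and> lin_op P \<and> nilpotent_op P \<and> self_adjoint B P \<and>
            jordan_blocks_same_height B P k"
    then have h: "symplectic_form B" "lin_op P" "self_adjoint B P" "jordan_blocks_same_height B P k"
      by auto
    show "(\<forall>i\<le>k. {v. (P ^^ i) v = 0} = range (P ^^ (k - i))) \<and>
            (\<forall>W. aut_invariant B P W \<longleftrightarrow> (\<exists>i\<le>k. W = {v. (P ^^ i) v = 0}))"
      by (rule main[OF h])
  qed
  show "\<forall>(B :: complex^'n \<Rightarrow> complex^'n \<Rightarrow> complex) (P :: complex^'n \<Rightarrow> complex^'n) (k::nat).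
            symplectic_form B \<and> lin_op P \<and> nilpotent_op P \<and> self_adjoint B P \<and>
            jordan_blocks_same_height B P k \<longrightarrow>
            (\<forall>i\<le>k. {v. (P ^^ i) v = 0} = range (P ^^ (k - i))) \<and>
            (\<forall>W. aut_invariant B P W \<longleftrightarrow> (\<exists>i\<le>k. W = {v. (P ^^ i) v = 0}))"
  proof (intro allI impI)
    fix B :: "complex^'n \<Rightarrow> complex^'n \<Rightarrow> complex" and P :: "complex^'n \<Rightarrow> complex^'n" and k :: nat
    assume "symplectic_form B \<and> lin_op P \<and> nilpotent_op P \<and> self_adjoint B P \<and>
            jordan_blocks_same_height B P k"
    then have h: "symplectic_form B" "lin_op P" "self_adjoint B P" "jordan_blocks_same_height B P k"
      by auto
    show "(\<forall>i\<le>k. {v. (P ^^ i) v = 0} = range (P ^^ (k - i))) \<and>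
            (\<forall>W. aut_invariant B P W \<longleftrightarrow> (\<exists>i\<le>k. W = {v. (P ^^ i) v = 0}))"
      by (rule main[OF h])
  qed
qed

end
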